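(* Let $q>5$ be a prime power which cannot be written as $2^p$ with $p$ prime. Then, for any generator $w$ of $\mathbb F_q^*$, the group $G(q)$ contains the permutation of $\mathbb F_q^*$ induced by $c\mapsto wc$, which is a $(q-1)$-cycle.
   Context: $\mathbb F_q$ is the field with $q$ elements, $\mathbb F_q^*$ its multiplicative group. $G(q)$ denotes the group of permutations of $\mathbb F_q^*$ generated by all permutations of $\mathbb F_q^*$ which can be represented as $c\mapsto ac^m+bc^n$ with $a,b\in\mathbb F_q^*$ and integers $0<m<n<q$. *)

theory Defs
  imports "HOL-Algebra.Bij" "HOL-Algebra.Generated_Groups" "HOL-Computational_Algebra.Primes"
begin

definition Fstar :: "'a::field set" where
  "Fstar = UNIV - {0}"

text \<open>Permutations of F_q^* are represented as
  elements of Bij Fstar (bijections of Fstar, extensional outside Fstar).\<close>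
definition binomial_perms :: "('a::{field,finite} \<Rightarrow> 'a) set" where
  "binomial_perms = {f \<in> Bij Fstar. \<exists>a b (m::nat) (n::nat). a \<noteq> 0 \<and> b \<noteq> 0 \<and> 0 < m \<and> m < n
      \<and> n < card (UNIV :: 'a set) \<and> f = restrict (\<lambda>c. a * c ^ m + b * c ^ n) Fstar}"

definition Gq :: "('a::{field,finite} \<Rightarrow> 'a) set" where
  "Gq = generate (BijGroup Fstar) binomial_perms"

definition is_generator :: "'a::field \<Rightarrow> bool" where
  "is_generator w \<longleftrightarrow> w \<noteq> 0 \<and> {w ^ k | k. True} = Fstar"

end

theory Submission imports Defs "HOL-Number_Theory.Residues" begin
lemma card_Fstar: "card (Fstar :: 'a::{field,finite} set) = card (UNIV :: 'a set) - 1"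
  unfolding Fstar_def by (simp add: card_Diff_singleton)
lemma Fstar_iff [simp]: "x \<in> Fstar \<longleftrightarrow> x \<noteq> 0"
  unfolding Fstar_def by simp
lemma Bij_of_inj:
  fixes f :: "'a::{field,finite} \<Rightarrow> 'a"
  assumes "\<And>x. x \<noteq> 0 \<Longrightarrow> f x \<noteq> 0" "inj_on f Fstar"
  shows "restrict f Fstar \<in> Bij Fstar"
proof -
  have "f ` Fstar \<subseteq> Fstar" using assms(1) by auto
  hence "f ` Fstar = Fstar" by (rule endo_inj_surj[rotated]) (use assms(2) in auto)
  hence "bij_betw f Fstar Fstar" using assms(2) by (simp add: bij_betw_def)
  hence "bij_betw (restrict f Fstar) Fstar Fstar" by (rule bij_betw_cong[THEN iffD1, rotated]) simp
  thus ?thesis unfolding Bij_def by simp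
qed
lemma pow_N:
  fixes x :: "'a::{field,finite}"
  assumes "x \<noteq> 0"
  shows "x ^ (card (UNIV :: 'a set) - 1) = 1"
proof -
  have "(\<Prod>y\<in>UNIV-{0}. x * y) = x ^ card (UNIV - {0::'a}) * \<Prod>(UNIV-{0})"
    by (simp add: prod.distrib)
  also have "card (UNIV - {0::'a}) = card (UNIV :: 'a set) - 1"
    by (simp add: card_Diff_singleton)
  also have "(\<Prod>y\<in>UNIV-{0}. x * y) = (\<Prod>y\<in>UNIV-{0}. y)"
    by (rule prod.reindex_bij_witness[of _ "\<lambda>y. y / x" "\<lambda>y. x * y"]) (use assms in auto)
  finally have "\<Prod>(UNIV-{0::'a}) = x ^ (card (UNIV :: 'a set) - 1) * \<Prod>(UNIV-{0::'a})" .
  moreover have "\<Prod>(UNIV-{0::'a}) \<noteq> 0" by simp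
  ultimately show ?thesis by simp
qed

lemma gen_order:
  fixes w :: "'a::{field,finite}"
  assumes "is_generator w" "0 < j" "w ^ j = 1"
  shows "card (UNIV :: 'a set) - 1 \<le> j"
proof -
  have "Fstar \<subseteq> (\<lambda>k. w ^ k) ` {..<j}"
  proof
    fix x :: 'a assume "x \<in> Fstar"
    then obtain k where k: "x = w ^ k" using assms(1) unfolding is_generator_def by blast
    have "w ^ k = w ^ (j * (k div j) + k mod j)" by simp
    also have "\<dots> = (w ^ j) ^ (k div j) * w ^ (k mod j)" by (simp only: power_add power_mult)
    also have "\<dots> = w ^ (k mod j)" using assms(3) by simp
    finally show "x \<in> (\<lambda>k. w ^ k) ` {..<j}" using k assms(2) by auto
  qed
  hence "card (Fstar :: 'a set) \<le> card ((\<lambda>k. w ^ k) ` {..<j})" by (intro card_mono) auto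
  also have "\<dots> \<le> j" using card_image_le[of "{..<j}" "\<lambda>k. w ^ k"] by simp
  finally show ?thesis by (simp add: card_Fstar)
qed


lemma Gq_key:
  fixes f :: "'a::{field,finite} \<Rightarrow> 'a"
  assumes FB: "restrict f Fstar \<in> binomial_perms"
    and HB: "restrict (\<lambda>c. w * f c) Fstar \<in> binomial_perms"
  shows "restrict (\<lambda>c. w * c) Fstar \<in> Gq"
proof -
  let ?G = "BijGroup (Fstar :: 'a set)"
  let ?F = "restrict f Fstar"
  let ?H = "restrict (\<lambda>c. w * f c) Fstar"
  let ?I = "restrict (inv_into Fstar ?F) Fstar"
  have F: "?F \<in> Bij Fstar" and H: "?H \<in> Bij Fstar"
    using FB HB unfolding binomial_perms_def by auto
  have inv: "inv\<^bsub>?G\<^esub> ?F = ?I" by (rule inv_BijGroup[OF F])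
  have I: "?I \<in> Bij Fstar" using restrict_inv_into_Bij[OF F] .
  have gen: "?H \<otimes>\<^bsub>?G\<^esub> inv\<^bsub>?G\<^esub> ?F \<in> Gq"
    unfolding Gq_def by (intro generate.eng generate.incl generate.inv FB HB)
  have mult: "?H \<otimes>\<^bsub>?G\<^esub> ?I = compose Fstar ?H ?I"
    using H I by (simp add: BijGroup_def)
  have img: "?F ` Fstar = Fstar" using F unfolding Bij_def bij_betw_def by auto
  have "compose Fstar ?H ?I = restrict (\<lambda>c. w * c) Fstar"
  proof (rule ext)
    fix x :: 'a
    show "compose Fstar ?H ?I x = restrict (\<lambda>c. w * c) Fstar x"
    proof (cases "x \<in> Fstar")
      case True
      have m: "inv_into Fstar ?F x \<in> Fstar" using Bij_inv_into_mem[OF F True] .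
      have e: "?F (inv_into Fstar ?F x) = x"
        by (rule f_inv_into_f) (use True img in auto)
      have "compose Fstar ?H ?I x = w * f (inv_into Fstar ?F x)"
        using True m by (simp add: compose_def)
      also have "f (inv_into Fstar ?F x) = x" using e m by simp
      finally show ?thesis using True by (simp only: restrict_apply')
    next
      case False
      then show ?thesis by (simp add: compose_def)
    qed
  qed
  with gen inv mult show ?thesis by simp
qed

lemma binom_Gq:
  fixes w a b :: "'a::{field,finite}"
  assumes "w \<noteq> 0" "a \<noteq> 0" "b \<noteq> 0" "0 < m" "m < n" "n < card (UNIV :: 'a set)"
    and nz: "\<And>x. x \<noteq> 0 \<Longrightarrow> a * x ^ m + b * x ^ n \<noteq> 0"
    and inj: "inj_on (\<lambda>x. a * x ^ m + b * x ^ n) Fstar"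
  shows "restrict (\<lambda>c. w * c) Fstar \<in> Gq"
proof -
  let ?f = "\<lambda>x. a * x ^ m + b * x ^ n"
  have "restrict ?f Fstar \<in> Bij Fstar" by (rule Bij_of_inj[OF nz inj])
  hence 1: "restrict ?f Fstar \<in> binomial_perms"
    unfolding binomial_perms_def mem_Collect_eq
    apply (rule conjI)
    apply (rule exI[of _ a], rule exI[of _ b], rule exI[of _ m], rule exI[of _ n])
    using assms by simp
  have nz2: "\<And>x. x \<noteq> 0 \<Longrightarrow> w * ?f x \<noteq> 0" using nz assms(1) by simp
  have inj2: "inj_on (\<lambda>x. w * ?f x) Fstar"
    using inj assms(1) unfolding inj_on_def by simp
  have "restrict (\<lambda>x. w * ?f x) Fstar \<in> Bij Fstar" by (rule Bij_of_inj[OF nz2 inj2])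
  moreover have "restrict (\<lambda>x. w * ?f x) Fstar = restrict (\<lambda>x. (w * a) * x ^ m + (w * b) * x ^ n) Fstar"
    by (simp add: algebra_simps)
  ultimately have 2: "restrict (\<lambda>x. w * ?f x) Fstar \<in> binomial_perms"
    unfolding binomial_perms_def mem_Collect_eq
    apply -
    apply (rule conjI, assumption)
    apply (rule exI[of _ "w * a"], rule exI[of _ "w * b"], rule exI[of _ m], rule exI[of _ n])
    using assms by simp
  show ?thesis by (rule Gq_key[OF 1 2])
qed

lemma pow_aux: "\<exists>c. (Suc y) ^ r = y * c + 1"
proof (induction r)
  case 0 show ?case by simp
next
  case (Suc r)
  then obtain c where c: "(Suc y) ^ r = y * c + 1" by blast
  have "(Suc y) ^ Suc r = y * (Suc y * c + 1) + 1"
    by (simp only: power_Suc c) (simp add: algebra_simps)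
  then show ?case by blast
qed

lemma pow_minus_one_dvd: "(y::nat) - 1 dvd y ^ r - 1"
proof (cases y)
  case 0 then show ?thesis by (cases r) auto
next
  case (Suc y')
  obtain c where "(Suc y') ^ r = y' * c + 1" using pow_aux by blast
  then show ?thesis using Suc by simp
qed

lemma swap_case:
  fixes x y a w :: "'a::field"
  assumes "x * (a + 1) = y * (a - 1)" "a + 1 = w ^ 2 * (a - 1)" "a \<noteq> 1" "w ^ (2 * h) = 1"
  shows "y ^ h = x ^ h"
proof -
  have "y * (a - 1) = x * (a + 1)" using assms(1) by simp
  also have "\<dots> = (x * w ^ 2) * (a - 1)" using assms(2) by (simp add: mult.assoc)
  finally have "y * (a - 1) = (x * w ^ 2) * (a - 1)" .
  moreover have "a - 1 \<noteq> 0" using assms(3) by simp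
  ultimately have "y = x * w ^ 2" by simp
  hence "y ^ h = x ^ h * w ^ (2 * h)" by (simp add: power_mult_distrib power_mult)
  thus ?thesis using assms(4) by simp
qed

lemma funpow_mult: "((\<lambda>x. w * x) ^^ k) c = w ^ k * (c::'a::comm_ring_1)"
  by (induction k) (simp_all add: algebra_simps)

theorem corollary4p2:
  fixes w :: "'a::{field,finite}"
  assumes "\<exists>p k. prime (p::nat) \<and> 0 < k \<and> card (UNIV :: 'a set) = p ^ k"
    and "card (UNIV :: 'a set) > 5"
    and "\<not> (\<exists>p. prime (p::nat) \<and> card (UNIV :: 'a set) = 2 ^ p)"
    and "is_generator w"
  shows "restrict (\<lambda>c. w * c) Fstar \<in> Gq
    \<and> (\<forall>c \<in> Fstar. {((\<lambda>x. w * x) ^^ k) c | k. True} = Fstar)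
    \<and> card (Fstar :: 'a set) = card (UNIV :: 'a set) - 1"
proof -
  obtain p k where pk: "prime (p::nat)" "0 < k" "card (UNIV :: 'a set) = p ^ k"
    using assms(1) by blast
  have w0: "w \<noteq> 0" using assms(4) unfolding is_generator_def by auto
  define N where "N = card (UNIV :: 'a set) - 1"
  have N5: "N \<ge> 5" using assms(2) unfolding N_def by simp
  have qN: "card (UNIV :: 'a set) = N + 1" using assms(2) unfolding N_def by simp
  have pos: "CHAR('a) > 0" by (rule finite_imp_CHAR_pos) simp
  have pc: "prime CHAR('a)" by (rule prime_CHAR_semidom[OF pos])
  have "CHAR('a) dvd p ^ k" using CHAR_dvd_CARD[where 'a='a] pk(3) by simp
  hence "CHAR('a) dvd p" using pc prime_dvd_power by blast
  hence CH: "CHAR('a) = p" using pc pk(1) primes_dvd_imp_eq by blast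
  have ord: "\<And>j. 0 < j \<Longrightarrow> w ^ j = 1 \<Longrightarrow> N \<le> j"
    using gen_order[OF assms(4)] unfolding N_def by blast
  have wN: "\<And>x::'a. x \<noteq> 0 \<Longrightarrow> x ^ N = 1" unfolding N_def by (rule pow_N)
  have G: "restrict (\<lambda>c. w * c) Fstar \<in> Gq"
  proof (cases "p = 2")
    case True
    have two: "(2::'a) = 0" using of_nat_CHAR[where 'a='a] CH True by simp
    have negid: "\<And>x::'a. - x = x"
    proof -
      fix x :: 'a
      have "x + x = 2 * x" by simp
      also have "\<dots> = 0" using two by simp
      finally show "- x = x" by (simp add: add_eq_0_iff2)
    qed
    have nk: "\<not> prime k" using assms(3) True pk(3) by auto
    have k3: "k > 2"
    proof (rule ccontr)
      assume "\<not> k > 2"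
      hence "(2::nat) ^ k \<le> 2 ^ 2" by (intro power_increasing) auto
      thus False using assms(2) pk(3) True by simp
    qed
    obtain d where d: "d dvd k" "d \<noteq> 1" "d \<noteq> k"
      using nk k3 unfolding prime_nat_iff by auto
    have "d \<le> k" using d(1) pk(2) by (simp add: dvd_imp_le)
    hence dk: "d < k" using d(3) by simp
    have "d \<noteq> 0" using d(1) pk(2) by auto
    hence d2: "d \<ge> 2" using d(2) by simp
    define e where "e = (2::nat) ^ d"
    have e4: "e \<ge> 4" unfolding e_def using power_increasing[OF d2, of "2::nat"] by simp
    have eq: "e < card (UNIV :: 'a set)" unfolding e_def using pk(3) True dk
      by (simp add: power_strict_increasing)
    obtain r where r: "k = d * r" using d(1) by blast
    have "e - 1 dvd e ^ r - 1" by (rule pow_minus_one_dvd)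
    moreover have "e ^ r = card (UNIV :: 'a set)" unfolding e_def using pk(3) True r
      by (simp add: power_mult)
    ultimately have "e - 1 dvd N" unfolding N_def by simp
    then obtain s where s: "N = (e - 1) * s" by blast
    have spos: "s > 0" using s N5 by (cases s) auto
    have sN: "s < N" using s spos e4 by simp
    have frob: "\<And>x y :: 'a. (x + y) ^ e = x ^ e + y ^ e"
      by (rule freshmans_dream') (simp_all add: CH True e_def pk(1))
    define f where "f = (\<lambda>x::'a. w * x ^ 1 + 1 * x ^ e)"
    have nz: "\<And>z. z \<noteq> 0 \<Longrightarrow> f z \<noteq> 0"
    proof
      fix z :: 'a assume z: "z \<noteq> 0" and fz: "f z = 0"
      have ee: "z ^ e = z * z ^ (e - 1)" using e4 by (cases e) auto
      have "z * (w + z ^ (e - 1)) = 0" using fz ee unfolding f_def by (simp add: algebra_simps)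
      hence "w + z ^ (e - 1) = 0" using z by simp
      hence "z ^ (e - 1) = - w" by (simp add: eq_neg_iff_add_eq_0 add.commute)
      hence ze: "z ^ (e - 1) = w" using negid by simp
      have "w ^ s = z ^ N" unfolding s ze[symmetric] by (simp add: power_mult)
      also have "\<dots> = 1" using wN z by simp
      finally have "N \<le> s" using ord spos by simp
      thus False using sN by simp
    qed
    have add: "\<And>x y. f (x + y) = f x + f y" unfolding f_def by (simp add: frob algebra_simps)
    have inj: "inj_on f Fstar"
    proof (rule inj_onI)
      fix x y :: 'a assume "f x = f y"
      hence "f (x + y) = 2 * f x" using add by simp
      hence "f (x + y) = 0" using two by simp
      hence "x + y = 0" using nz by blast
      hence "x = - y" by (simp add: eq_neg_iff_add_eq_0)
      thus "x = y" using negid by simp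
    qed
    show ?thesis
      by (rule binom_Gq[of w w 1 1 e]) (use w0 e4 eq nz inj in \<open>simp_all add: f_def\<close>)
  next
    case False
    have two: "(2::'a) \<noteq> 0"
    proof
      assume "(2::'a) = 0"
      hence "of_nat 2 = (0::'a)" by simp
      hence "CHAR('a) dvd 2" by (simp only: of_nat_eq_0_iff_char_dvd)
      hence "p = 2" using CH pk(1) primes_dvd_imp_eq[of p 2] by simp
      thus False using False by simp
    qed
    have "odd p"
    proof
      assume "even p"
      hence "2 = p" using pk(1) primes_dvd_imp_eq[of 2 p] by simp
      thus False using False by simp
    qed
    hence "odd (card (UNIV :: 'a set))" using pk(2,3) by simp
    hence "even N" using qN by simp
    then obtain h where h: "N = 2 * h" by blast
    have h0: "0 < h" "h < N" using h N5 by auto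
    have sq: "\<And>x::'a. x \<noteq> 0 \<Longrightarrow> x ^ h = 1 \<or> x ^ h = -1"
    proof -
      fix x :: 'a assume "x \<noteq> 0"
      hence "(x ^ h) ^ 2 = 1" using wN h by (simp add: power_mult[symmetric] mult.commute)
      thus "x ^ h = 1 \<or> x ^ h = -1" by (simp add: power2_eq_1_iff)
    qed
    have w2: "w ^ 2 \<noteq> 1" using ord[of 2] N5 by auto
    have w2': "w ^ 2 \<noteq> -1"
    proof
      assume "w ^ 2 = -1"
      have "w ^ 4 = (w ^ 2) ^ 2" by (simp flip: power_mult)
      hence "w ^ 4 = 1" using \<open>w ^ 2 = -1\<close> by simp
      thus False using ord[of 4] N5 by auto
    qed
    have wh: "w ^ (2 * h) = 1" using wN w0 h by simp
    define a where "a = (w ^ 2 + 1) / (w ^ 2 - 1)"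
    have wm: "w ^ 2 - 1 \<noteq> 0" using w2 by simp
    have a1: "a + 1 = w ^ 2 * (a - 1)" unfolding a_def using wm by (simp add: field_simps)
    have an1: "a \<noteq> 1"
    proof
      assume "a = 1" thus False using a1 two by simp
    qed
    have am1: "a \<noteq> -1"
    proof
      assume "a = -1"
      hence "w ^ 2 * 2 = 0" using a1 by simp
      thus False using two w0 by simp
    qed
    have a0: "a \<noteq> 0"
    proof
      assume "a = 0"
      hence "w ^ 2 + 1 = 0" unfolding a_def using wm by simp
      hence "w ^ 2 = -1" by (simp add: eq_neg_iff_add_eq_0)
      thus False using w2' by simp
    qed
    define f where "f = (\<lambda>x::'a. a * x ^ 1 + 1 * x ^ (h + 1))"
    have fx: "\<And>x. f x = x * (a + x ^ h)" unfolding f_def by (simp add: algebra_simps)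
    have apm: "\<And>x::'a. x \<noteq> 0 \<Longrightarrow> a + x ^ h \<noteq> 0"
    proof -
      fix x :: 'a assume "x \<noteq> 0"
      then consider "x ^ h = 1" | "x ^ h = -1" using sq by blast
      thus "a + x ^ h \<noteq> 0"
      proof cases
        case 1 thus ?thesis using am1 by (auto simp: eq_neg_iff_add_eq_0)
      next
        case 2 thus ?thesis using an1 by simp
      qed
    qed
    have nz: "\<And>z. z \<noteq> 0 \<Longrightarrow> f z \<noteq> 0" using apm fx by simp
    have inj: "inj_on f Fstar"
    proof (rule inj_onI)
      fix x y :: 'a assume x: "x \<in> Fstar" and y: "y \<in> Fstar" and fxy: "f x = f y"
      have xy: "x * (a + x ^ h) = y * (a + y ^ h)" using fxy fx by simp
      have st: "x ^ h = y ^ h"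
      proof (rule ccontr)
        assume ne: "x ^ h \<noteq> y ^ h"
        consider "x ^ h = 1" "y ^ h = -1" | "x ^ h = -1" "y ^ h = 1"
          using sq[of x] sq[of y] x y ne by auto
        thus False
        proof cases
          case 1
          hence "x * (a + 1) = y * (a - 1)" using xy by simp
          hence "y ^ h = x ^ h" by (rule swap_case[OF _ a1 an1 wh])
          thus False using ne by simp
        next
          case 2
          hence "y * (a + 1) = x * (a - 1)" using xy by simp
          hence "x ^ h = y ^ h" by (rule swap_case[OF _ a1 an1 wh])
          thus False using ne by simp
        qed
      qed
      hence "x * (a + x ^ h) = y * (a + x ^ h)" using xy by simp
      thus "x = y" using apm[of x] x by simp
    qed
    show ?thesis
      by (rule binom_Gq[of w a 1 1 "h + 1"]) (use w0 a0 h0 qN nz inj in \<open>simp_all add: f_def\<close>)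
  qed
  have orb: "\<forall>c \<in> Fstar. {((\<lambda>x. w * x) ^^ k) c | k. True} = Fstar"
  proof
    fix c :: 'a assume c: "c \<in> Fstar"
    show "{((\<lambda>x. w * x) ^^ k) c | k. True} = Fstar"
    proof
      show "{((\<lambda>x. w * x) ^^ k) c | k. True} \<subseteq> Fstar"
        using c w0 by (auto simp: funpow_mult)
    next
      show "Fstar \<subseteq> {((\<lambda>x. w * x) ^^ k) c | k. True}"
      proof
        fix y :: 'a assume y: "y \<in> Fstar"
        hence "y / c \<in> Fstar" using c by simp
        then obtain k where k: "y / c = w ^ k" using assms(4) unfolding is_generator_def by blast
        hence "y = w ^ k * c" using c by (simp add: field_simps)
        thus "y \<in> {((\<lambda>x. w * x) ^^ k) c | k. True}" by (auto simp: funpow_mult)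
      qed
    qed
  qed
  show ?thesis using G orb card_Fstar by blast
qed

end
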